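(* Consider FULLSET MALIQUOT. Then $\mathcal{SG}(n)\in\{0,1\}$, and $\mathcal{SG}(n)=1$ if and only if $n>1$ is square-free.
   Context: FULLSET MALIQUOT is the impartial normal-play game on positive integers where the single option from a heap $n>1$ is the disjunctive sum of all proper divisors of $n$ (all $d\mid n$ with $1\le d<n$); a heap of size $1$ is terminal. $\mathcal{SG}$ denotes the Sprague-Grundy value (mex rule, nim-sum). *)

theory Defs
  imports "HOL-Computational_Algebra.Squarefree"
begin

definition mex :: "nat set \<Rightarrow> nat" where
  "mex S = (LEAST k. k \<notin> S)"

definition nim_sum :: "nat list \<Rightarrow> nat" where
  "nim_sum xs = foldr (\<lambda>x acc. xor x acc) xs 0"

text \<open>A heap n > 1 has exactly one option, the
  disjunctive sum of all proper divisors d of n (1 \<le> d < n), whose Grundy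
  value is the nim-sum of the values of the summands. The value at 0 is an
  irrelevant default (0 is not a position).\<close>
function sg :: "nat \<Rightarrow> nat" where
  "sg n = (if n = 0 then 0
           else if n = 1 then mex {}
           else mex {nim_sum (map sg (filter (\<lambda>d. d dvd n) [1..<n]))})"
  by auto
termination
  by (relation "measure id") auto

end

theory Submission
  imports Defs "HOL-Library.FuncSet"
begin

declare sg.simps[simp del]

lemma nim_sum_01:
  assumes "set xs \<subseteq> {0,1}"
  shows "nim_sum xs = length (filter (\<lambda>x. x = 1) xs) mod 2"
  using assms
proof (induction xs)
  case Nil
  then show ?case by (simp add: nim_sum_def)
next
  case (Cons a xs)
  have r: "nim_sum (a # xs) = xor a (nim_sum xs)" by (simp add: nim_sum_def)
  have ih: "nim_sum xs = length (filter (\<lambda>x. x = 1) xs) mod 2" using Cons by auto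
  have "a = 0 \<or> a = 1" using Cons.prems by auto
  then show ?case
  proof
    assume "a = 0" then show ?thesis using r ih by simp
  next
    assume a1: "a = 1"
    have "length (filter (\<lambda>x. x = 1) xs) mod 2 = 0 \<or> length (filter (\<lambda>x. x = 1) xs) mod 2 = 1" by auto
    then show ?thesis using r ih a1 by (auto simp: mod_Suc)
  qed
qed

lemma mex_empty: "mex {} = 0" by (simp add: mex_def)
lemma mex_0: "mex {0} = 1"
  unfolding mex_def by (rule Least_equality) auto
lemma mex_1: "mex {1} = 0"
  unfolding mex_def by (rule Least_equality) auto

lemma even_sqf_divisors:
  fixes n :: nat
  assumes "n > 1"
  shows "even (card {d. d dvd n \<and> squarefree d})"
proof -
  obtain p where p: "prime p" "p dvd n" using assms prime_factor_nat by (metis less_irrefl)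
  define S1 where "S1 = {d. d dvd n \<and> squarefree d \<and> \<not> p dvd d}"
  define S2 where "S2 = {d. d dvd n \<and> squarefree d \<and> p dvd d}"
  have fin: "finite {d. d dvd n}" using assms by (simp add: finite_divisors_nat)
  have f1: "finite S1" "finite S2" unfolding S1_def S2_def by (auto intro: finite_subset[OF _ fin])
  have un: "{d. d dvd n \<and> squarefree d} = S1 \<union> S2" "S1 \<inter> S2 = {}" unfolding S1_def S2_def by auto
  have "bij_betw (\<lambda>d. p * d) S1 S2"
  proof (rule bij_betwI[where g = "\<lambda>d. d div p"])
    show "(\<lambda>d. p * d) \<in> S1 \<rightarrow> S2"
    proof
      fix d assume "d \<in> S1"
      hence d: "d dvd n" "squarefree d" "\<not> p dvd d" unfolding S1_def by auto
      have cop: "coprime p d" using p(1) d(3) by (simp add: prime_imp_coprime)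
      have "p * d dvd n" using cop p(2) d(1) by (simp add: divides_mult)
      moreover have "squarefree (p * d)"
        using squarefree_mult_coprime[OF cop] p(1) d(2) squarefree_prime by blast
      ultimately show "p * d \<in> S2" unfolding S2_def by auto
    qed
    show "(\<lambda>d. d div p) \<in> S2 \<rightarrow> S1"
    proof
      fix d assume "d \<in> S2"
      hence d: "d dvd n" "squarefree d" "p dvd d" unfolding S2_def by auto
      then obtain e where e: "d = p * e" by blast
      have pe: "p > 0" using p(1) prime_gt_0_nat by blast
      have ed: "d div p = e" using e pe by simp
      have "e dvd n" using e d(1) by (metis dvd_mult_right)
      moreover have "squarefree e" using d(2) e squarefree_mono by (metis dvd_triv_right)
      moreover have "\<not> p dvd e"
      proof
        assume "p dvd e"
        hence "p ^ 2 dvd d" using e by (auto simp: power2_eq_square)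
        hence "p dvd 1" using d(2) squarefreeD by blast
        thus False using p(1) by simp
      qed
      ultimately show "d div p \<in> S1" unfolding S1_def ed by auto
    qed
    show "\<And>x. x \<in> S1 \<Longrightarrow> p * x div p = x" using p(1) prime_gt_0_nat by simp
    show "\<And>y. y \<in> S2 \<Longrightarrow> p * (y div p) = y" unfolding S2_def by auto
  qed
  hence "card S1 = card S2" by (rule bij_betw_same_card)
  thus ?thesis using un f1 by (simp add: card_Un_disjoint)
qed

lemma count_proper:
  fixes n :: nat
  assumes "n > 1"
  shows "card {d. 1 < d \<and> d < n \<and> d dvd n \<and> squarefree d}
       = card {d. d dvd n \<and> squarefree d} - 1 - (if squarefree n then 1 else 0)"
proof -
  let ?S = "{d. d dvd n \<and> squarefree d}"
  have fin: "finite ?S" using assms by (auto intro: finite_subset[OF _ finite_divisors_nat[of n]])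
  have eq: "{d. 1 < d \<and> d < n \<and> d dvd n \<and> squarefree d} = ?S - {1} - (if squarefree n then {n} else {})"
  proof (intro set_eqI iffI)
    fix d assume "d \<in> {d. 1 < d \<and> d < n \<and> d dvd n \<and> squarefree d}"
    thus "d \<in> ?S - {1} - (if squarefree n then {n} else {})" by auto
  next
    fix d assume h: "d \<in> ?S - {1} - (if squarefree n then {n} else {})"
    hence d: "d dvd n" "squarefree d" "d \<noteq> 1" "d \<noteq> n" by (auto split: if_splits)
    have "d \<le> n" using d(1) assms by (simp add: dvd_imp_le)
    moreover have "d \<noteq> 0"
    proof
      assume "d = 0" with d(1) have "n = 0" by simp
      with assms show False by simp
    qed
    ultimately show "d \<in> {d. 1 < d \<and> d < n \<and> d dvd n \<and> squarefree d}" using d by auto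
  qed
  show ?thesis
    unfolding eq using fin assms by (auto simp: card_Diff_singleton_if)
qed

theorem mainTheorem14:
  fixes n :: nat
  assumes "n \<ge> 1"
  shows "sg n \<in> {0, 1} \<and> (sg n = 1 \<longleftrightarrow> n > 1 \<and> squarefree n)"
  using assms
proof (induction n rule: less_induct)
  case (less n)
  show ?case
  proof (cases "n = 1")
    case True
    have "sg 1 = 0" by (subst sg.simps) (simp add: mex_empty)
    then show ?thesis using True by simp
  next
    case False
    hence n1: "n > 1" using less.prems by simp
    define L where "L = filter (\<lambda>d. d dvd n) [1..<n]"
    have sgn: "sg n = mex {nim_sum (map sg L)}" using n1 unfolding L_def by (subst sg.simps) simp
    have setL: "set L = {d. 1 \<le> d \<and> d < n \<and> d dvd n}" unfolding L_def by auto
    have IH: "\<And>d. d \<in> set L \<Longrightarrow> sg d \<in> {0,1} \<and> (sg d = 1 \<longleftrightarrow> d > 1 \<and> squarefree d)"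
    proof -
      fix d assume "d \<in> set L"
      hence "d < n" "1 \<le> d" unfolding setL by auto
      thus "sg d \<in> {0,1} \<and> (sg d = 1 \<longleftrightarrow> d > 1 \<and> squarefree d)" by (rule less.IH)
    qed
    have "set (map sg L) \<subseteq> {0,1}"
    proof
      fix x assume "x \<in> set (map sg L)"
      then obtain d where d: "d \<in> set L" "x = sg d" by auto
      have "sg d \<in> {0,1}" using IH[OF d(1)] by (rule conjunct1)
      thus "x \<in> {0,1}" using d(2) by simp
    qed
    hence ns0: "nim_sum (map sg L) = length (filter (\<lambda>x. x = 1) (map sg L)) mod 2"
      by (rule nim_sum_01)
    have "length (filter (\<lambda>x. x = 1) (map sg L)) = length (filter (\<lambda>d. sg d = 1) L)"
      by (simp only: filter_map comp_def length_map)
    with ns0 have ns: "nim_sum (map sg L) = length (filter (\<lambda>d. sg d = 1) L) mod 2" by simp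
    have dL: "distinct L" unfolding L_def by simp
    have "length (filter (\<lambda>d. sg d = 1) L) = card ({d. sg d = 1} \<inter> set L)"
      using distinct_length_filter[OF dL] by simp
    also have "{d. sg d = 1} \<inter> set L = {d. 1 < d \<and> d < n \<and> d dvd n \<and> squarefree d}"
      using IH setL by auto
    also have "card \<dots> = card {d. d dvd n \<and> squarefree d} - 1 - (if squarefree n then 1 else 0)"
      using count_proper[OF n1] .
    finally have c: "length (filter (\<lambda>d. sg d = 1) L) = card {d. d dvd n \<and> squarefree d} - 1 - (if squarefree n then 1 else 0)" .
    have ev: "even (card {d. d dvd n \<and> squarefree d})" using even_sqf_divisors[OF n1] .
    have pos: "card {d. d dvd n \<and> squarefree d} \<ge> 2 \<or> \<not> squarefree n"
    proof (cases "squarefree n")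
      case True
      have "{1, n} \<subseteq> {d. d dvd n \<and> squarefree d}" using True by auto
      moreover have "finite {d. d dvd n \<and> squarefree d}" using n1
        by (auto intro: finite_subset[OF _ finite_divisors_nat[of n]])
      ultimately have "card {1, n} \<le> card {d. d dvd n \<and> squarefree d}" by (rule card_mono[rotated])
      thus ?thesis using n1 by simp
    qed simp
    have pos1: "card {d. d dvd n \<and> squarefree d} \<ge> 1"
    proof -
      have "{1} \<subseteq> {d. d dvd n \<and> squarefree d}" by auto
      moreover have "finite {d. d dvd n \<and> squarefree d}" using n1
        by (auto intro: finite_subset[OF _ finite_divisors_nat[of n]])
      ultimately have "card {1::nat} \<le> card {d. d dvd n \<and> squarefree d}" by (rule card_mono[rotated])
      thus ?thesis by simp
    qed
    show ?thesis
    proof (cases "squarefree n")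
      case True
      obtain k where k: "card {d. d dvd n \<and> squarefree d} = 2 * k" using ev by (elim evenE)
      have k1: "k \<ge> 1" using pos True k by simp
      have "length (filter (\<lambda>d. sg d = 1) L) = 2 * (k - 1)" using c k k1 True by simp
      hence "nim_sum (map sg L) = 0" using ns by simp
      then show ?thesis using sgn mex_0 True n1 by simp
    next
      case False
      obtain k where k: "card {d. d dvd n \<and> squarefree d} = 2 * k" using ev by (elim evenE)
      have k1: "k \<ge> 1" using pos1 k by simp
      have "length (filter (\<lambda>d. sg d = 1) L) = 2 * (k - 1) + 1" using c k k1 False by simp
      hence "nim_sum (map sg L) = 1" using ns by simp
      then show ?thesis using sgn mex_1 False n1 by simp
    qed
  qed
qed

end
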